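(* Let $n,k\geq 1$ and let ${\bf m}=(m_1,\dots,m_k)$ be an array of nonnegative integers. For every permutation $\tau\in\mathfrak{S}_{k-1}$ there exists a bijection $\mathfrak{a}\mapsto\mathfrak{b}$ from $\mathcal{A}_n^k({\bf m})$ onto $\mathcal{A}_n^k({\bf m}')$, where ${\bf m}'=(m_{\tau(1)},\dots,m_{\tau(k-1)},m_k)$, such that $\mathrm{DES}(\mathfrak{a})=\mathrm{DES}(\mathfrak{b})$, $\mathrm{DEZ}(\mathfrak{a})=\mathrm{DEZ}(\mathfrak{b})$ and $\mathrm{Der}(\mathfrak{a})=\mathrm{Der}(\mathfrak{b})$.
   Context: $\mathfrak{S}_n$ is the set of permutations of $[n]=\{1,\dots,n\}$; $\mathrm{FIX}(\pi)=\{i:\pi(i)=i\}$. For $k\ge1$, a $k$-arrangement of $[n]$ is a pair $\mathfrak{a}=(\pi,\phi)$ with $\pi\in\mathfrak{S}_n$ and $\phi:\mathrm{FIX}(\pi)\to\{-1,\dots,-k\}$ arbitrary; $\mathcal{A}_n^k$ is the set of them. The positive reduction of an integer word replaces every occurrence of its $i$-th smallest positive letter by $i$, for all $i$ (negative letters unchanged). The derangement form $\mathrm{df}_k(\mathfrak{a})$ is obtained from $\pi(1)\cdots\pi(n)$ by replacing $\pi(i)$ with $\phi(i)$ for each $i\in\mathrm{FIX}(\pi)$ and then applying positive reduction; the permutation form $\mathrm{pf}_k(\mathfrak{a})$ is obtained likewise, replacing only for those $i\in\mathrm{FIX}(\pi)$ with $\phi(i)\neq-k$. For an integer word $w=w_1\cdots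 w_n$, $\mathrm{DES}(w)=\{i\in[n-1]:w_i>w_{i+1}\}$, and $\mathrm{Pos}(w)$ is the subword of positive letters. $\mathrm{DES}(\mathfrak{a})=\mathrm{DES}(\mathrm{pf}_k(\mathfrak{a}))$, $\mathrm{DEZ}(\mathfrak{a})=\mathrm{DES}(\mathrm{df}_k(\mathfrak{a}))$, $\mathrm{Der}(\mathfrak{a})=\mathrm{Pos}(\mathrm{df}_k(\mathfrak{a}))$, $\mathrm{fix}_i(\mathfrak{a})=|\{j\in\mathrm{FIX}(\pi):\phi(j)=-i\}|$, and $\mathcal{A}_n^k({\bf m})=\{\mathfrak{a}\in\mathcal{A}_n^k:\mathrm{fix}_i(\mathfrak{a})=m_i,\ 1\le i\le k\}$. *)

theory Defs
  imports "HOL-Combinatorics.Permutations"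
begin

(* Integer words are lists of integers; w_i is  w ! (i-1). *)

definition FIXset :: "(nat \<Rightarrow> nat) \<Rightarrow> nat \<Rightarrow> nat set" where
  "FIXset \<pi> n = {i \<in> {1..n}. \<pi> i = i}"

(* k-arrangements of [n]: pairs (pi, phi), pi a permutation of {1..n},
   phi : FIX(pi) -> {-1..-k}; phi is normalised to 0 outside FIX(pi) so that
   each arrangement has a unique representative. *)
definition arrangements :: "nat \<Rightarrow> nat \<Rightarrow> ((nat \<Rightarrow> nat) \<times> (nat \<Rightarrow> int)) set" where
  "arrangements n k = {(\<pi>, \<phi>). \<pi> permutes {1..n} \<and>
      (\<forall>i \<in> FIXset \<pi> n. \<phi> i \<in> {- int k .. -1}) \<and>
      (\<forall>i. i \<notin> FIXset \<pi> n \<longrightarrow> \<phi> i = 0)}"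

(* positive reduction: the i-th smallest positive letter becomes i *)
definition pos_red :: "int list \<Rightarrow> int list" where
  "pos_red w = map (\<lambda>x. if 0 < x then int (card {y \<in> set w. 0 < y \<and> y \<le> x}) else x) w"

definition df :: "nat \<Rightarrow> nat \<Rightarrow> (nat \<Rightarrow> nat) \<times> (nat \<Rightarrow> int) \<Rightarrow> int list" where
  "df n k a = (case a of (\<pi>, \<phi>) \<Rightarrow>
     pos_red (map (\<lambda>i. if i \<in> FIXset \<pi> n then \<phi> i else int (\<pi> i)) [1..<n+1]))"

definition pf :: "nat \<Rightarrow> nat \<Rightarrow> (nat \<Rightarrow> nat) \<times> (nat \<Rightarrow> int) \<Rightarrow> int list" where
  "pf n k a = (case a of (\<pi>, \<phi>) \<Rightarrow>
     pos_red (map (\<lambda>i. if i \<in> FIXset \<pi> n \<and> \<phi> i \<noteq> - int k then \<phi> i else int (\<pi> i)) [1..<n+1]))"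

definition DESw :: "int list \<Rightarrow> nat set" where
  "DESw w = {i \<in> {1..<length w}. w ! (i - 1) > w ! i}"

definition Pos :: "int list \<Rightarrow> int list" where
  "Pos w = filter (\<lambda>x. 0 < x) w"

definition DES_arr :: "nat \<Rightarrow> nat \<Rightarrow> (nat \<Rightarrow> nat) \<times> (nat \<Rightarrow> int) \<Rightarrow> nat set" where
  "DES_arr n k a = DESw (pf n k a)"

definition DEZ_arr :: "nat \<Rightarrow> nat \<Rightarrow> (nat \<Rightarrow> nat) \<times> (nat \<Rightarrow> int) \<Rightarrow> nat set" where
  "DEZ_arr n k a = DESw (df n k a)"

definition Der_arr :: "nat \<Rightarrow> nat \<Rightarrow> (nat \<Rightarrow> nat) \<times> (nat \<Rightarrow> int) \<Rightarrow> int list" where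
  "Der_arr n k a = Pos (df n k a)"

definition fix_cnt :: "nat \<Rightarrow> nat \<Rightarrow> (nat \<Rightarrow> nat) \<times> (nat \<Rightarrow> int) \<Rightarrow> nat" where
  "fix_cnt n i a = (case a of (\<pi>, \<phi>) \<Rightarrow> card {j \<in> FIXset \<pi> n. \<phi> j = - int i})"

definition arrangements_m :: "nat \<Rightarrow> nat \<Rightarrow> (nat \<Rightarrow> nat) \<Rightarrow> ((nat \<Rightarrow> nat) \<times> (nat \<Rightarrow> int)) set" where
  "arrangements_m n k m = {a \<in> arrangements n k. \<forall>i \<in> {1..k}. fix_cnt n i a = m i}"

end

theory Submission
  imports Defs
begin



lemma pos_red_nth: "i < length w \<Longrightarrow> pos_red w ! i =
   (if 0 < w!i then int (card {y\<in>set w. 0 < y \<and> y \<le> w!i}) else w!i)"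
  by (simp add: pos_red_def)

lemma pos_red_len[simp]: "length (pos_red w) = length w" by (simp add: pos_red_def)

lemma pos_red_pos: assumes "i < length w" shows "(0 < pos_red w ! i) = (0 < w!i)"
proof (cases "0 < w!i")
  case True
  have "w!i \<in> {y\<in>set w. 0 < y \<and> y \<le> w!i}" using True assms by auto
  hence "card {y\<in>set w. 0 < y \<and> y \<le> w!i} > 0" by (subst card_gt_0_iff) auto
  thus ?thesis using True pos_red_nth[OF assms] by simp
qed (use pos_red_nth[OF assms] in simp)

definition relw :: "int list \<Rightarrow> int list \<Rightarrow> bool" where
  "relw w w' = (length w = length w' \<and> (\<forall>i<length w. (0 < w!i \<longleftrightarrow> 0 < w'!i) \<and> (0 < w!i \<longrightarrow> w!i = w'!i)))"

lemma relw_D: assumes "relw w w'" "i < length w"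
  shows "length w = length w'" "(0 < w!i \<longleftrightarrow> 0 < w'!i)" "0 < w!i \<Longrightarrow> w'!i = w!i"
proof -
  have r: "length w = length w'" "\<forall>i<length w. (0 < w!i \<longleftrightarrow> 0 < w'!i) \<and> (0 < w!i \<longrightarrow> w!i = w'!i)"
    using assms(1) unfolding relw_def by blast+
  have s: "(0 < w!i \<longleftrightarrow> 0 < w'!i) \<and> (0 < w!i \<longrightarrow> w!i = w'!i)" using r(2) assms(2) by blast
  show "length w = length w'" by (fact r(1))
  show "(0 < w!i \<longleftrightarrow> 0 < w'!i)" using s by blast
  show "0 < w!i \<Longrightarrow> w'!i = w!i" using s by simp
qed

lemma relw_len: "relw w w' \<Longrightarrow> length w = length w'"
  unfolding relw_def by (rule conjunct1)

lemma relw_set: assumes "relw w w'" shows "{y\<in>set w. 0 < y \<and> y \<le> x} = {y\<in>set w'. 0 < y \<and> y \<le> x}"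
proof -
  note L = relw_len[OF assms]
  have 1: "y \<in> set w'" if yy: "y \<in> set w" "0 < y" for y
  proof -
    obtain i where i: "i < length w" "w!i = y" using yy(1) by (auto simp: in_set_conv_nth)
    have "0 < w!i" using i yy(2) by simp
    hence "w'!i = y" using relw_D(3)[OF assms i(1)] i by linarith
    moreover have "i < length w'" using i L by simp
    ultimately show ?thesis using nth_mem[of i w'] by simp
  qed
  have 2: "y \<in> set w" if yy: "y \<in> set w'" "0 < y" for y
  proof -
    obtain i where i: "i < length w'" "w'!i = y" using yy(1) by (auto simp: in_set_conv_nth)
    have i1: "i < length w" using i L by simp
    have "0 < w!i" using relw_D(2)[OF assms i1] i yy(2) by simp
    hence "w!i = y" using relw_D(3)[OF assms i1] i by linarith
    thus ?thesis using nth_mem[OF i1] by simp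
  qed
  show ?thesis
  proof (rule set_eqI)
    fix y show "y \<in> {y\<in>set w. 0 < y \<and> y \<le> x} \<longleftrightarrow> y \<in> {y\<in>set w'. 0 < y \<and> y \<le> x}"
      using 1[of y] 2[of y] by auto
  qed
qed

lemma relw_pos_red: assumes "relw w w'" "i < length w" "0 < w!i"
  shows "pos_red w ! i = pos_red w' ! i"
proof -
  have i': "i < length w'" using relw_len[OF assms(1)] assms(2) by simp
  have eq: "w'!i = w!i" using relw_D(3)[OF assms(1,2,3)] .
  have e: "{y\<in>set w. 0 < y \<and> y \<le> w!i} = {y\<in>set w'. 0 < y \<and> y \<le> w'!i}"
    unfolding eq by (rule relw_set[OF assms(1)])
  have p: "0 < w'!i" unfolding eq by (fact assms(3))
  show ?thesis unfolding pos_red_nth[OF assms(2)] pos_red_nth[OF i'] e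
    using assms(3) p by simp
qed

lemma relw_neg: assumes "i < length w" "\<not> 0 < w!i" shows "pos_red w ! i = w ! i"
  using assms pos_red_nth by simp

lemma filter_pos_eq:
  "length xs = length ys \<Longrightarrow> (\<forall>i<length xs. (0 < xs!i \<longleftrightarrow> 0 < ys!i) \<and> (0 < xs!i \<longrightarrow> xs!i = ys!i))
   \<Longrightarrow> filter (\<lambda>x. 0 < x) xs = filter (\<lambda>x. (0::int) < x) ys"
proof (induction xs arbitrary: ys)
  case Nil thus ?case by simp
next
  case (Cons x xs)
  obtain y ys' where y: "ys = y # ys'" using Cons.prems(1) by (cases ys) auto
  have l: "length xs = length ys'" using Cons.prems(1) y by simp
  have "0 < length (x#xs)" by simp
  hence "(0 < (x#xs)!0 \<longleftrightarrow> 0 < ys!0) \<and> (0 < (x#xs)!0 \<longrightarrow> (x#xs)!0 = ys!0)" using Cons.prems(2) by blast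
  hence h0: "(0 < x \<longleftrightarrow> 0 < y) \<and> (0 < x \<longrightarrow> x = y)" unfolding y nth_Cons_0 .
  have "\<forall>i<length xs. (0 < xs!i \<longleftrightarrow> 0 < ys'!i) \<and> (0 < xs!i \<longrightarrow> xs!i = ys'!i)"
  proof (intro allI impI)
    fix i assume "i < length xs"
    hence "Suc i < length (x#xs)" by simp
    hence "(0 < (x#xs)!Suc i \<longleftrightarrow> 0 < ys!Suc i) \<and> (0 < (x#xs)!Suc i \<longrightarrow> (x#xs)!Suc i = ys!Suc i)" using Cons.prems(2) by blast
    thus "(0 < xs!i \<longleftrightarrow> 0 < ys'!i) \<and> (0 < xs!i \<longrightarrow> xs!i = ys'!i)" unfolding y nth_Cons_Suc .
  qed
  hence "filter (\<lambda>x. 0 < x) xs = filter (\<lambda>x. 0 < x) ys'" using Cons.IH l by blast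
  show ?case
  proof (cases "0 < x")
    case True
    hence "x = y" using h0 by blast
    thus ?thesis using True \<open>filter _ xs = _\<close> y by simp
  next
    case False
    hence "\<not> 0 < y" using h0 by blast
    thus ?thesis using False \<open>filter _ xs = _\<close> y by simp
  qed
qed

lemma Pos_eq: assumes "relw w w'" shows "Pos (pos_red w) = Pos (pos_red w')"
  unfolding Pos_def
proof (rule filter_pos_eq)
  show "length (pos_red w) = length (pos_red w')" using relw_len[OF assms] by simp
  show "\<forall>i<length (pos_red w). (0 < pos_red w ! i) = (0 < pos_red w' ! i) \<and> (0 < pos_red w ! i \<longrightarrow> pos_red w ! i = pos_red w' ! i)"
  proof (intro allI impI)
    fix i assume i: "i < length (pos_red w)"
    hence i': "i < length w" "i < length w'" using relw_len[OF assms] by auto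
    show "(0 < pos_red w ! i) = (0 < pos_red w' ! i) \<and> (0 < pos_red w ! i \<longrightarrow> pos_red w ! i = pos_red w' ! i)"
      using pos_red_pos[OF i'(1)] pos_red_pos[OF i'(2)] relw_pos_red[OF assms i'(1)] relw_D(2)[OF assms i'(1)] by auto
  qed
qed

lemma DESw_eq:
  assumes "relw w w'"
    and cmp: "\<And>i. Suc i < length w \<Longrightarrow> \<not> 0 < w!i \<Longrightarrow> \<not> 0 < w!(Suc i) \<Longrightarrow> (w!i > w!Suc i \<longleftrightarrow> w'!i > w'!Suc i)"
  shows "DESw (pos_red w) = DESw (pos_red w')"
proof -
  have len: "length w = length w'" using relw_len[OF assms(1)] .
  have PP: "(pos_red w ! p > pos_red w ! Suc p) = (pos_red w' ! p > pos_red w' ! Suc p)" if p: "Suc p < length w" for p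
  proof -
    have p0: "p < length w" using p by simp
    have r0: "(0 < w!p \<longleftrightarrow> 0 < w'!p)" "(0 < w!Suc p \<longleftrightarrow> 0 < w'!Suc p)" using relw_D(2)[OF assms(1) p0] relw_D(2)[OF assms(1) p] by auto
    have pp: "(0 < pos_red w ! p) = (0 < w!p)" "(0 < pos_red w ! Suc p) = (0 < w!Suc p)"
      "(0 < pos_red w' ! p) = (0 < w'!p)" "(0 < pos_red w' ! Suc p) = (0 < w'!Suc p)"
      using pos_red_pos p p0 len by auto
    show ?thesis
    proof (cases "0 < w!p")
      case True note T1 = True
      show ?thesis
      proof (cases "0 < w!Suc p")
        case True
        thus ?thesis using T1 relw_pos_red[OF assms(1) p0] relw_pos_red[OF assms(1) p] by simp
      next
        case False
        thus ?thesis using T1 pp r0 by auto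
      qed
    next
      case False note F1 = False
      show ?thesis
      proof (cases "0 < w!Suc p")
        case True
        thus ?thesis using F1 pp r0 by auto
      next
        case False
        thus ?thesis using F1 r0 relw_neg[OF p0] relw_neg[OF p] relw_neg[of p w'] relw_neg[of "Suc p" w'] len p p0 cmp[OF p] by auto
      qed
    qed
  qed
  have "\<forall>i\<in>{1..<length w}. (pos_red w ! (i - 1) > pos_red w ! i) = (pos_red w' ! (i - 1) > pos_red w' ! i)"
  proof
    fix i assume "i \<in> {1..<length w}"
    then obtain p where "i = Suc p" "Suc p < length w" by (cases i) auto
    thus "(pos_red w ! (i - 1) > pos_red w ! i) = (pos_red w' ! (i - 1) > pos_red w' ! i)" using PP by simp
  qed
  thus ?thesis unfolding DESw_def using len by auto
qed




definition Dset :: "nat set \<Rightarrow> (nat \<Rightarrow> bool) \<Rightarrow> nat set" where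
  "Dset S b = {j. j \<in> S \<and> Suc j \<in> S \<and> b j \<and> \<not> b (Suc j)}"
definition Frs :: "nat set \<Rightarrow> (nat \<Rightarrow> bool) \<Rightarrow> nat set" where
  "Frs S b = S - Dset S b - Suc ` Dset S b"
definition lf :: "nat set \<Rightarrow> nat \<Rightarrow> nat" where
  "lf F j = (LEAST l. {l..j} \<subseteq> F)"
definition rf :: "nat set \<Rightarrow> nat \<Rightarrow> nat" where
  "rf F j = (LEAST r. j \<le> r \<and> Suc r \<notin> F)"
definition mu :: "nat set \<Rightarrow> nat \<Rightarrow> nat" where
  "mu F j = lf F j + rf F j - j"
definition trb :: "nat set \<Rightarrow> (nat \<Rightarrow> bool) \<Rightarrow> nat \<Rightarrow> bool" where
  "trb S b j = (if j \<in> Frs S b then \<not> b (mu (Frs S b) j) else b j)"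

lemma lf_props:
  assumes "j \<in> F"
  shows "lf F j \<le> j \<and> {lf F j..j} \<subseteq> F \<and> (lf F j = 0 \<or> lf F j - 1 \<notin> F)"
proof -
  have e: "{j..j} \<subseteq> F" using assms by auto
  have 1: "{lf F j..j} \<subseteq> F" unfolding lf_def by (rule LeastI[of _ j], fact e)
  have 2: "lf F j \<le> j" unfolding lf_def by (rule Least_le, fact e)
  have 3: "lf F j = 0 \<or> lf F j - 1 \<notin> F"
  proof (rule ccontr)
    assume "\<not> ?thesis"
    hence a: "lf F j > 0" "lf F j - 1 \<in> F" by auto
    have "{lf F j - 1..j} = insert (lf F j - 1) {lf F j..j}" using a 2 by auto
    hence "{lf F j - 1..j} \<subseteq> F" using 1 a by simp
    moreover have "lf F j - 1 < lf F j" using a by auto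
    ultimately show False unfolding lf_def using not_less_Least by blast
  qed
  show ?thesis using 1 2 3 by auto
qed

lemma rf_props:
  assumes "finite F" "j \<in> F"
  shows "j \<le> rf F j \<and> {j..rf F j} \<subseteq> F \<and> Suc (rf F j) \<notin> F"
proof -
  define r0 where "r0 = max j (Max F)"
  have ex: "j \<le> r0 \<and> Suc r0 \<notin> F"
  proof
    show "j \<le> r0" unfolding r0_def by simp
    show "Suc r0 \<notin> F"
    proof
      assume "Suc r0 \<in> F"
      hence "Suc r0 \<le> Max F" using Max_ge assms(1) by blast
      thus False unfolding r0_def by simp
    qed
  qed
  have 1: "j \<le> rf F j \<and> Suc (rf F j) \<notin> F" unfolding rf_def by (rule LeastI[of _ r0], fact ex)
  have 2: "{j..rf F j} \<subseteq> F"
  proof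
    fix i assume i: "i \<in> {j..rf F j}"
    show "i \<in> F"
    proof (rule ccontr)
      assume n: "i \<notin> F"
      hence "i \<noteq> j" using assms by auto
      hence "j \<le> i - 1 \<and> Suc (i - 1) \<notin> F" "i - 1 < rf F j" using i n by auto
      thus False unfolding rf_def using not_less_Least by blast
    qed
  qed
  show ?thesis using 1 2 by auto
qed

lemma blk_unique:
  assumes "finite F" "l \<le> j" "j \<le> r" "{l..r} \<subseteq> F" "l = 0 \<or> l - 1 \<notin> F" "Suc r \<notin> F"
  shows "lf F j = l \<and> rf F j = r"
proof -
  have j: "j \<in> F" using assms by auto
  note L = lf_props[OF j] and R = rf_props[OF assms(1) j]
  have "lf F j = l"
  proof (rule ccontr)
    assume "lf F j \<noteq> l"
    hence "l < lf F j \<or> lf F j < l" by auto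
    thus False
    proof
      assume "l < lf F j"
      hence "lf F j - 1 \<in> {l..r}" using L assms by auto
      thus False using L assms \<open>l < lf F j\<close> by auto
    next
      assume "lf F j < l"
      hence "l - 1 \<in> {lf F j..j}" using assms by auto
      thus False using L assms \<open>lf F j < l\<close> by auto
    qed
  qed
  moreover have "rf F j = r"
  proof (rule ccontr)
    assume "rf F j \<noteq> r"
    hence "r < rf F j \<or> rf F j < r" by auto
    thus False
    proof
      assume "r < rf F j"
      hence "Suc r \<in> {j..rf F j}" using assms by auto
      thus False using R assms by blast
    next
      assume "rf F j < r"
      hence "Suc (rf F j) \<in> {l..r}" using assms R by auto
      thus False using R assms by blast
    qed
  qed
  ultimately show ?thesis by auto
qed

lemma blk_sub:
  assumes "finite F" "j \<in> F"
  shows "{lf F j..rf F j} \<subseteq> F"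
proof
  fix x assume "x \<in> {lf F j..rf F j}"
  hence "x \<in> {lf F j..j} \<or> x \<in> {j..rf F j}" by auto
  thus "x \<in> F" using lf_props[OF assms(2)] rf_props[OF assms] by blast
qed

lemma mu_props:
  assumes "finite F" "j \<in> F"
  shows "mu F j \<in> F \<and> mu F (mu F j) = j"
proof -
  obtain l r where lr: "l = lf F j" "r = rf F j" by blast
  have L: "l \<le> j" "l = 0 \<or> l - 1 \<notin> F" using lf_props[OF assms(2)] lr by auto
  have R: "j \<le> r" "Suc r \<notin> F" using rf_props[OF assms] lr by auto
  have sub: "{l..r} \<subseteq> F" using blk_sub[OF assms] lr by simp
  have m: "mu F j = l + r - j" unfolding mu_def lr by simp
  have mi: "l \<le> mu F j" "mu F j \<le> r" using m L R by auto
  have "mu F j \<in> F" using mi sub by auto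
  moreover have "lf F (mu F j) = l \<and> rf F (mu F j) = r"
    by (rule blk_unique[OF assms(1) mi sub L(2) R(2)])
  ultimately show ?thesis using m mi L R unfolding mu_def by auto
qed

lemma mu_Suc:
  assumes "finite F" "j \<in> F" "Suc j \<in> F"
  shows "Suc (mu F (Suc j)) = mu F j"
proof -
  obtain l r where lr: "l = lf F j" "r = rf F j" by blast
  have L: "l \<le> j" "l = 0 \<or> l - 1 \<notin> F" using lf_props[OF assms(2)] lr by auto
  have R: "j \<le> r" "Suc r \<notin> F" using rf_props[OF assms(1,2)] lr by auto
  have sub: "{l..r} \<subseteq> F" using blk_sub[OF assms(1,2)] lr by simp
  have "r \<noteq> j" using R assms(3) by auto
  hence "Suc j \<le> r" using R by auto
  hence "lf F (Suc j) = l \<and> rf F (Suc j) = r"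
    using blk_unique[OF assms(1) _ _ sub L(2) R(2)] L by auto
  thus ?thesis unfolding mu_def using L R lr \<open>Suc j \<le> r\<close> by auto
qed




lemma Dset_sub: "Dset S b \<subseteq> S" "Suc ` Dset S b \<subseteq> S"
  unfolding Dset_def by auto

lemma Frs_sub: "Frs S b \<subseteq> S" unfolding Frs_def by auto

lemma Frs_fin: "finite S \<Longrightarrow> finite (Frs S b)" using Frs_sub finite_subset by blast

lemma mu_Frs: "finite S \<Longrightarrow> j \<in> Frs S b \<Longrightarrow> mu (Frs S b) j \<in> Frs S b \<and> mu (Frs S b) (mu (Frs S b) j) = j"
  using mu_props Frs_fin by blast

lemma Dset_trb:
  assumes fin: "finite S"
  shows "Dset S (trb S b) = Dset S b"
proof -
  let ?F = "Frs S b" and ?D = "Dset S b" and ?b = "trb S b"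
  have key: "(?b j \<and> \<not> ?b (Suc j)) = (b j \<and> \<not> b (Suc j))" if j: "j \<in> S" "Suc j \<in> S" for j
  proof (cases "j \<in> ?F")
    case True
    hence nD: "j \<notin> ?D" unfolding Frs_def by auto
    hence r: "\<not> (b j \<and> \<not> b (Suc j))" using j unfolding Dset_def by auto
    show ?thesis
    proof (cases "Suc j \<in> ?F")
      case True2: True
      define i where "i = mu ?F (Suc j)"
      have si: "Suc i = mu ?F j" unfolding i_def by (rule mu_Suc[OF Frs_fin[OF fin] True True2])
      have iF: "i \<in> ?F" using mu_Frs[OF fin True2] i_def by auto
      have siF: "Suc i \<in> ?F" using mu_Frs[OF fin True] si by auto
      have "i \<notin> ?D" using iF unfolding Frs_def by auto
      hence "\<not> (b i \<and> \<not> b (Suc i))" using iF siF Frs_sub[of S b] unfolding Dset_def by auto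
      moreover have "?b j = (\<not> b (Suc i))" "?b (Suc j) = (\<not> b i)"
        using True True2 si i_def unfolding trb_def by auto
      ultimately show ?thesis using r by auto
    next
      case False
      hence "Suc j \<in> ?D \<or> Suc j \<in> Suc ` ?D" using j unfolding Frs_def by auto
      hence "Suc j \<in> ?D" using nD by auto
      hence "b (Suc j)" unfolding Dset_def by auto
      moreover have "?b (Suc j) = b (Suc j)" using False unfolding trb_def by auto
      ultimately show ?thesis using r by auto
    qed
  next
    case False
    show ?thesis
    proof (cases "Suc j \<in> ?F")
      case True
      hence nD: "j \<notin> ?D" unfolding Frs_def by auto
      hence r: "\<not> (b j \<and> \<not> b (Suc j))" using j unfolding Dset_def by auto
      have "j \<in> ?D \<or> j \<in> Suc ` ?D" using j False unfolding Frs_def by auto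
      then obtain i where "i \<in> ?D" "j = Suc i" using nD by auto
      hence "\<not> b j" unfolding Dset_def by auto
      moreover have "?b j = b j" using False unfolding trb_def by auto
      ultimately show ?thesis using r by auto
    next
      case False2: False
      have "?b j = b j" "?b (Suc j) = b (Suc j)" using False False2 unfolding trb_def by auto
      thus ?thesis by simp
    qed
  qed
  show ?thesis unfolding Dset_def using key by blast
qed

lemma Frs_trb: "finite S \<Longrightarrow> Frs S (trb S b) = Frs S b"
  unfolding Frs_def using Dset_trb by simp

lemma trb_trb: assumes "finite S" shows "trb S (trb S b) = b"
proof
  fix j
  show "trb S (trb S b) j = b j"
  proof (cases "j \<in> Frs S b")
    case True
    have "mu (Frs S b) j \<in> Frs S b" "mu (Frs S b) (mu (Frs S b) j) = j" using mu_Frs[OF assms True] by auto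
    thus ?thesis using True unfolding trb_def[of S "trb S b"] Frs_trb[OF assms] unfolding trb_def by simp
  next
    case False
    thus ?thesis unfolding trb_def[of S "trb S b"] Frs_trb[OF assms] unfolding trb_def by simp
  qed
qed

lemma trb_local:
  assumes "finite S" "\<forall>j\<in>S. b1 j = b2 j" "j \<in> S"
  shows "trb S b1 j = trb S b2 j"
proof -
  have D: "Dset S b1 = Dset S b2" using assms(2) unfolding Dset_def by auto
  hence F: "Frs S b1 = Frs S b2" unfolding Frs_def by simp
  show ?thesis
  proof (cases "j \<in> Frs S b1")
    case True
    have "mu (Frs S b1) j \<in> S" using mu_Frs[OF assms(1) True] Frs_sub by blast
    thus ?thesis using True F assms(2) unfolding trb_def by simp
  next
    case False
    thus ?thesis using F assms unfolding trb_def by simp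
  qed
qed

lemma card_trb:
  assumes fin: "finite S"
  shows "card {j\<in>S. trb S b j} = card {j\<in>S. \<not> b j}"
proof -
  let ?F = "Frs S b" and ?D = "Dset S b" and ?m = "mu (Frs S b)"
  have finD: "finite ?D" "finite (Suc ` ?D)" "finite ?F"
    using finite_subset[OF Dset_sub(1) fin] finite_subset[OF Dset_sub(2) fin] finite_subset[OF Frs_sub fin] by auto
  have dis: "?D \<inter> Suc ` ?D = {}" unfolding Dset_def by auto
  have cases3: "j \<in> S \<Longrightarrow> j \<in> ?D \<or> j \<in> Suc ` ?D \<or> j \<in> ?F" for j unfolding Frs_def by auto
  have inD: "j \<in> ?D \<Longrightarrow> j \<notin> ?F \<and> b j \<and> j \<in> S" for j unfolding Frs_def Dset_def by auto
  have inSD: "j \<in> Suc ` ?D \<Longrightarrow> j \<notin> ?F \<and> \<not> b j \<and> j \<in> S" for j unfolding Frs_def Dset_def by auto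
  have e1: "{j\<in>S. trb S b j} = ?D \<union> {j\<in>?F. \<not> b (?m j)}"
  proof (rule set_eqI)
    fix j
    show "j \<in> {j\<in>S. trb S b j} \<longleftrightarrow> j \<in> ?D \<union> {j\<in>?F. \<not> b (?m j)}"
    proof (cases "j \<in> ?F")
      case True
      thus ?thesis using inD Frs_sub[of S b] unfolding trb_def by auto
    next
      case False
      hence "trb S b j = b j" unfolding trb_def by simp
      thus ?thesis using False cases3[of j] inD[of j] inSD[of j] by auto
    qed
  qed
  have e2: "{j\<in>S. \<not> b j} = Suc ` ?D \<union> {j\<in>?F. \<not> b j}"
  proof (rule set_eqI)
    fix j
    show "j \<in> {j\<in>S. \<not> b j} \<longleftrightarrow> j \<in> Suc ` ?D \<union> {j\<in>?F. \<not> b j}"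
      using cases3[of j] inD[of j] inSD[of j] Frs_sub[of S b] by auto
  qed
  have d1: "?D \<inter> {j\<in>?F. \<not> b (?m j)} = {}" unfolding Frs_def by auto
  have d2: "Suc ` ?D \<inter> {j\<in>?F. \<not> b j} = {}" unfolding Frs_def by auto
  have c1: "card (Suc ` ?D) = card ?D" by (simp add: card_image)
  have "bij_betw ?m {j\<in>?F. \<not> b (?m j)} {j\<in>?F. \<not> b j}"
    by (rule bij_betw_byWitness[where f'="?m"]) (use mu_Frs[OF fin] in auto)
  hence c2: "card {j\<in>?F. \<not> b (?m j)} = card {j\<in>?F. \<not> b j}" by (rule bij_betw_same_card)
  show ?thesis unfolding e1 e2
    using card_Un_disjoint[OF finD(1) _ d1] card_Un_disjoint[OF finD(2) _ d2] c1 c2 finD(3) by simp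
qed




lemma arr_D:
  assumes "(\<pi>, \<phi>) \<in> arrangements n k"
  shows "\<pi> permutes {1..n}" "\<And>i. i \<in> FIXset \<pi> n \<Longrightarrow> - int k \<le> \<phi> i \<and> \<phi> i \<le> -1"
        "\<And>i. i \<notin> FIXset \<pi> n \<Longrightarrow> \<phi> i = 0"
  using assms unfolding arrangements_def by auto

lemma pi_pos: assumes "\<pi> permutes {1..n}" "i \<in> {1..n}" shows "0 < int (\<pi> i)"
proof -
  have "\<pi> i \<in> {1..n}" using permutes_in_image[OF assms(1)] assms(2) by simp
  thus ?thesis by simp
qed

lemma FIX_range: "i \<in> FIXset \<pi> n \<Longrightarrow> i \<in> {1..n}" unfolding FIXset_def by simp

lemma nth_word: "p < n \<Longrightarrow> map f [1..<n+1] ! p = f (Suc p)"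
  by (subst nth_map) (simp_all del: upt_Suc)

lemma stats_gen:
  assumes arr: "(\<pi>, \<phi>) \<in> arrangements n k" "(\<pi>, \<phi>') \<in> arrangements n k"
    and out: "\<And>j. j \<notin> S \<Longrightarrow> \<phi>' j = \<phi> j"
    and inS: "\<And>j. j \<in> S \<Longrightarrow> j \<in> FIXset \<pi> n \<and> (\<phi> j = -int a \<or> \<phi> j = -int (Suc a)) \<and> (\<phi>' j = -int a \<or> \<phi>' j = -int (Suc a))"
    and notS: "\<And>j. j \<in> FIXset \<pi> n \<Longrightarrow> j \<notin> S \<Longrightarrow> \<phi> j \<noteq> -int a \<and> \<phi> j \<noteq> -int (Suc a)"
    and ak: "Suc a < k"
    and cmp: "\<And>j. j \<in> S \<Longrightarrow> Suc j \<in> S \<Longrightarrow> (\<phi> j > \<phi> (Suc j) \<longleftrightarrow> \<phi>' j > \<phi>' (Suc j))"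
  shows "DES_arr n k (\<pi>, \<phi>') = DES_arr n k (\<pi>, \<phi>) \<and> DEZ_arr n k (\<pi>, \<phi>') = DEZ_arr n k (\<pi>, \<phi>)
         \<and> Der_arr n k (\<pi>, \<phi>') = Der_arr n k (\<pi>, \<phi>)"
proof -
  let ?F = "FIXset \<pi> n"
  have perm: "\<pi> permutes {1..n}" using arr_D(1)[OF arr(1)] .
  have adj: "(\<phi> j > \<phi> (Suc j) \<longleftrightarrow> \<phi>' j > \<phi>' (Suc j))" if j: "j \<in> ?F" "Suc j \<in> ?F" for j
  proof (cases "j \<in> S")
    case True note T1 = True
    show ?thesis
    proof (cases "Suc j \<in> S")
      case True thus ?thesis using T1 cmp by blast
    next
      case False
      have e: "\<phi>' (Suc j) = \<phi> (Suc j)" using out[OF False] .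
      have ne: "\<phi> (Suc j) \<noteq> -int a" "\<phi> (Suc j) \<noteq> -int (Suc a)" using notS[OF j(2) False] by auto
      have v: "\<phi> j = -int a \<or> \<phi> j = -int (Suc a)" "\<phi>' j = -int a \<or> \<phi>' j = -int (Suc a)" using inS[OF T1] by auto
      show ?thesis unfolding e using ne v by arith
    qed
  next
    case False note F1 = False
    show ?thesis
    proof (cases "Suc j \<in> S")
      case True
      have e: "\<phi>' j = \<phi> j" using out[OF F1] .
      have ne: "\<phi> j \<noteq> -int a" "\<phi> j \<noteq> -int (Suc a)" using notS[OF j(1) F1] by auto
      have v: "\<phi> (Suc j) = -int a \<or> \<phi> (Suc j) = -int (Suc a)" "\<phi>' (Suc j) = -int a \<or> \<phi>' (Suc j) = -int (Suc a)" using inS[OF True] by auto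
      show ?thesis unfolding e using ne v by arith
    next
      case False
      show ?thesis using out[OF F1] out[OF False] by simp
    qed
  qed
  have kk: "\<phi>' j = - int k \<longleftrightarrow> \<phi> j = - int k" for j
  proof (cases "j \<in> S")
    case True
    thus ?thesis using inS[OF True] ak by auto
  next
    case False thus ?thesis using out by simp
  qed
  define ud where "ud = (\<lambda>f i. if i \<in> ?F then f i else int (\<pi> i))"
  define w where "w = map (ud \<phi>) [1..<n+1]"
  define w' where "w' = map (ud \<phi>') [1..<n+1]"
  have df1: "df n k (\<pi>, \<phi>) = pos_red w" unfolding df_def w_def ud_def by simp
  have df2: "df n k (\<pi>, \<phi>') = pos_red w'" unfolding df_def w'_def ud_def by simp
  have lw: "length w = n" "length w' = n" unfolding w_def w'_def by simp_all
  have wp: "w ! p = ud \<phi> (Suc p)" "w' ! p = ud \<phi>' (Suc p)" if "p < n" for p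
    unfolding w_def w'_def by (rule nth_word[OF that])+
  have posw: "0 < w!p \<longleftrightarrow> Suc p \<notin> ?F" "0 < w'!p \<longleftrightarrow> Suc p \<notin> ?F" if p: "p < n" for p
  proof -
    have i: "Suc p \<in> {1..n}" using p by simp
    show "0 < w!p \<longleftrightarrow> Suc p \<notin> ?F"
      using wp[OF p] pi_pos[OF perm i] arr_D(2)[OF arr(1), of "Suc p"] unfolding ud_def by force
    show "0 < w'!p \<longleftrightarrow> Suc p \<notin> ?F"
      using wp[OF p] pi_pos[OF perm i] arr_D(2)[OF arr(2), of "Suc p"] unfolding ud_def by force
  qed
  have rel1: "relw w w'" unfolding relw_def
  proof (intro conjI allI impI)
    show "length w = length w'" using lw by simp
  next
    fix i assume i: "i < length w"
    hence i': "i < n" using lw by simp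
    show "(0 < w!i) = (0 < w'!i)" using posw[OF i'] by simp
  next
    fix i assume i: "i < length w" "0 < w ! i"
    hence i': "i < n" using lw by simp
    have "Suc i \<notin> ?F" using posw(1)[OF i'] i(2) by simp
    thus "w!i = w'!i" using wp[OF i'] unfolding ud_def by simp
  qed
  have DEZ: "DESw (pos_red w) = DESw (pos_red w')"
  proof (rule DESw_eq[OF rel1])
    fix i assume i: "Suc i < length w" "\<not> 0 < w!i" "\<not> 0 < w!Suc i"
    hence i': "i < n" "Suc i < n" using lw by auto
    have f: "Suc i \<in> ?F" "Suc (Suc i) \<in> ?F" using posw(1)[OF i'(1)] posw(1)[OF i'(2)] i by auto
    show "(w!i > w!Suc i) = (w'!i > w'!Suc i)"
      unfolding wp[OF i'(1)] wp[OF i'(2)] ud_def using f adj[OF f] by simp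
  qed
  have Der: "Pos (pos_red w) = Pos (pos_red w')" by (rule Pos_eq[OF rel1])
  define vd where "vd = (\<lambda>f i. if i \<in> ?F \<and> f i \<noteq> - int k then f i else int (\<pi> i))"
  define v where "v = map (vd \<phi>) [1..<n+1]"
  define v' where "v' = map (vd \<phi>') [1..<n+1]"
  have pf1: "pf n k (\<pi>, \<phi>) = pos_red v" unfolding pf_def v_def vd_def by simp
  have pf2: "pf n k (\<pi>, \<phi>') = pos_red v'" unfolding pf_def v'_def vd_def by simp
  have lv: "length v = n" "length v' = n" unfolding v_def v'_def by simp_all
  have vp: "v ! p = vd \<phi> (Suc p)" "v' ! p = vd \<phi>' (Suc p)" if "p < n" for p
    unfolding v_def v'_def by (rule nth_word[OF that])+
  have posv: "0 < v!p \<longleftrightarrow> \<not> (Suc p \<in> ?F \<and> \<phi> (Suc p) \<noteq> - int k)" "0 < v'!p \<longleftrightarrow> \<not> (Suc p \<in> ?F \<and> \<phi> (Suc p) \<noteq> - int k)"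
    if p: "p < n" for p
  proof -
    have i: "Suc p \<in> {1..n}" using p by simp
    show "0 < v!p \<longleftrightarrow> \<not> (Suc p \<in> ?F \<and> \<phi> (Suc p) \<noteq> - int k)"
      using vp[OF p] pi_pos[OF perm i] arr_D(2)[OF arr(1), of "Suc p"] unfolding vd_def by force
    show "0 < v'!p \<longleftrightarrow> \<not> (Suc p \<in> ?F \<and> \<phi> (Suc p) \<noteq> - int k)"
      using vp[OF p] pi_pos[OF perm i] arr_D(2)[OF arr(2), of "Suc p"] kk[of "Suc p"] unfolding vd_def by force
  qed
  have rel2: "relw v v'" unfolding relw_def
  proof (intro conjI allI impI)
    show "length v = length v'" using lv by simp
  next
    fix i assume i: "i < length v"
    hence i': "i < n" using lv by simp
    show "(0 < v!i) = (0 < v'!i)" using posv[OF i'] by simp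
  next
    fix i assume i: "i < length v" "0 < v ! i"
    hence i': "i < n" using lv by simp
    have "\<not> (Suc i \<in> ?F \<and> \<phi> (Suc i) \<noteq> - int k)" using posv(1)[OF i'] i(2) by simp
    thus "v!i = v'!i" using vp[OF i'] kk[of "Suc i"] unfolding vd_def by auto
  qed
  have DES: "DESw (pos_red v) = DESw (pos_red v')"
  proof (rule DESw_eq[OF rel2])
    fix i assume i: "Suc i < length v" "\<not> 0 < v!i" "\<not> 0 < v!Suc i"
    hence i': "i < n" "Suc i < n" using lv by auto
    have f: "Suc i \<in> ?F" "Suc (Suc i) \<in> ?F" "\<phi> (Suc i) \<noteq> - int k" "\<phi> (Suc (Suc i)) \<noteq> - int k"
      using posv(1)[OF i'(1)] posv(1)[OF i'(2)] i by auto
    have f': "\<phi>' (Suc i) \<noteq> - int k" "\<phi>' (Suc (Suc i)) \<noteq> - int k" using f(3,4) kk by auto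
    show "(v!i > v!Suc i) = (v'!i > v'!Suc i)"
      unfolding vp[OF i'(1)] vp[OF i'(2)] vd_def using f f' adj[OF f(1,2)] by simp
  qed
  show ?thesis unfolding DES_arr_def DEZ_arr_def Der_arr_def df1 df2 pf1 pf2 using DES DEZ Der by simp
qed




definition Sset :: "nat \<Rightarrow> nat \<Rightarrow> (nat \<Rightarrow> nat) \<Rightarrow> (nat \<Rightarrow> int) \<Rightarrow> nat set" where
  "Sset n a \<pi> \<phi> = {j \<in> FIXset \<pi> n. \<phi> j = -int a \<or> \<phi> j = -int (Suc a)}"

definition newphi :: "nat \<Rightarrow> nat \<Rightarrow> (nat \<Rightarrow> nat) \<Rightarrow> (nat \<Rightarrow> int) \<Rightarrow> nat \<Rightarrow> int" where
  "newphi n a \<pi> \<phi> = (\<lambda>j. if j \<in> Sset n a \<pi> \<phi> then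
      (if trb (Sset n a \<pi> \<phi>) (\<lambda>i. \<phi> i = -int a) j then -int a else -int (Suc a)) else \<phi> j)"

definition Psi :: "nat \<Rightarrow> nat \<Rightarrow> (nat \<Rightarrow> nat) \<times> (nat \<Rightarrow> int) \<Rightarrow> (nat \<Rightarrow> nat) \<times> (nat \<Rightarrow> int)" where
  "Psi n a x = (fst x, newphi n a (fst x) (snd x))"

lemma fin_S: "finite (Sset n a \<pi> \<phi>)"
proof -
  have "Sset n a \<pi> \<phi> \<subseteq> {1..n}" unfolding Sset_def FIXset_def by auto
  thus ?thesis using finite_subset by blast
qed

lemma S_new: "Sset n a \<pi> (newphi n a \<pi> \<phi>) = Sset n a \<pi> \<phi>"
  unfolding Sset_def[of n a \<pi> "newphi n a \<pi> \<phi>"] newphi_def by (auto simp: Sset_def)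

lemma b_new: "j \<in> Sset n a \<pi> \<phi> \<Longrightarrow> (newphi n a \<pi> \<phi> j = -int a) = trb (Sset n a \<pi> \<phi>) (\<lambda>i. \<phi> i = -int a) j"
  unfolding newphi_def by auto

lemma newphi_inv: "newphi n a \<pi> (newphi n a \<pi> \<phi>) = \<phi>"
proof
  fix j
  let ?S = "Sset n a \<pi> \<phi>" and ?b = "\<lambda>i. \<phi> i = -int a"
  show "newphi n a \<pi> (newphi n a \<pi> \<phi>) j = \<phi> j"
  proof (cases "j \<in> ?S")
    case True
    have loc: "\<forall>i\<in>?S. (newphi n a \<pi> \<phi> i = -int a) = trb ?S ?b i" using b_new by blast
    have "trb ?S (\<lambda>i. newphi n a \<pi> \<phi> i = -int a) j = trb ?S (trb ?S ?b) j"
      by (rule trb_local[OF fin_S loc True])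
    also have "\<dots> = ?b j" using trb_trb[OF fin_S] by simp
    finally have t: "trb ?S (\<lambda>i. newphi n a \<pi> \<phi> i = -int a) j = ?b j" .
    have v: "\<phi> j = -int a \<or> \<phi> j = -int (Suc a)" using True unfolding Sset_def by auto
    show ?thesis
      unfolding newphi_def[of n a \<pi> "newphi n a \<pi> \<phi>"] S_new using True t v by auto
  next
    case False
    thus ?thesis unfolding newphi_def[of n a \<pi> "newphi n a \<pi> \<phi>"] S_new by (simp add: newphi_def)
  qed
qed

lemma Psi_inv: "Psi n a (Psi n a x) = x"
  unfolding Psi_def using newphi_inv by (cases x) simp

lemma arr_new:
  assumes "(\<pi>, \<phi>) \<in> arrangements n k" "1 \<le> a" "Suc a \<le> k"
  shows "(\<pi>, newphi n a \<pi> \<phi>) \<in> arrangements n k"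
proof -
  have S: "Sset n a \<pi> \<phi> \<subseteq> FIXset \<pi> n" unfolding Sset_def by auto
  show ?thesis using assms S unfolding arrangements_def newphi_def by auto
qed

lemma cnt_new:
  assumes "i \<noteq> a" "i \<noteq> Suc a"
  shows "fix_cnt n i (\<pi>, newphi n a \<pi> \<phi>) = fix_cnt n i (\<pi>, \<phi>)"
proof -
  have "{j \<in> FIXset \<pi> n. newphi n a \<pi> \<phi> j = - int i} = {j \<in> FIXset \<pi> n. \<phi> j = - int i}"
    using assms unfolding newphi_def Sset_def by auto
  thus ?thesis unfolding fix_cnt_def by simp
qed

lemma cnt_new_a:
  "fix_cnt n a (\<pi>, newphi n a \<pi> \<phi>) = fix_cnt n (Suc a) (\<pi>, \<phi>)"
  "fix_cnt n (Suc a) (\<pi>, newphi n a \<pi> \<phi>) = fix_cnt n a (\<pi>, \<phi>)"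
proof -
  let ?S = "Sset n a \<pi> \<phi>" and ?b = "\<lambda>i. \<phi> i = -int a"
  have e1: "{j \<in> FIXset \<pi> n. newphi n a \<pi> \<phi> j = - int a} = {j\<in>?S. trb ?S ?b j}"
    unfolding newphi_def Sset_def by auto
  have e2: "{j \<in> FIXset \<pi> n. \<phi> j = - int (Suc a)} = {j\<in>?S. \<not> ?b j}"
    unfolding Sset_def by auto
  have e3: "{j \<in> FIXset \<pi> n. newphi n a \<pi> \<phi> j = - int (Suc a)} = {j\<in>?S. \<not> trb ?S ?b j}"
    unfolding newphi_def Sset_def by auto
  have e4: "{j \<in> FIXset \<pi> n. \<phi> j = - int a} = {j\<in>?S. trb ?S (trb ?S ?b) j}"
    unfolding trb_trb[OF fin_S] unfolding Sset_def by auto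
  show "fix_cnt n a (\<pi>, newphi n a \<pi> \<phi>) = fix_cnt n (Suc a) (\<pi>, \<phi>)"
    unfolding fix_cnt_def using e1 e2 card_trb[OF fin_S] by simp
  show "fix_cnt n (Suc a) (\<pi>, newphi n a \<pi> \<phi>) = fix_cnt n a (\<pi>, \<phi>)"
    unfolding fix_cnt_def using e3 e4 card_trb[OF fin_S, of n a \<pi> \<phi> "trb ?S ?b"] by simp
qed

lemma stats_new:
  assumes "(\<pi>, \<phi>) \<in> arrangements n k" "1 \<le> a" "Suc a < k"
  shows "DES_arr n k (\<pi>, newphi n a \<pi> \<phi>) = DES_arr n k (\<pi>, \<phi>) \<and> DEZ_arr n k (\<pi>, newphi n a \<pi> \<phi>) = DEZ_arr n k (\<pi>, \<phi>)
         \<and> Der_arr n k (\<pi>, newphi n a \<pi> \<phi>) = Der_arr n k (\<pi>, \<phi>)"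
proof (rule stats_gen[OF assms(1) arr_new[OF assms(1,2)], where S = "Sset n a \<pi> \<phi>" and a = a])
  show "Suc a \<le> k" using assms by simp
  show "Suc a < k" by (fact assms(3))
  show "\<And>j. j \<notin> Sset n a \<pi> \<phi> \<Longrightarrow> newphi n a \<pi> \<phi> j = \<phi> j" unfolding newphi_def by simp
  show "\<And>j. j \<in> Sset n a \<pi> \<phi> \<Longrightarrow> j \<in> FIXset \<pi> n \<and> (\<phi> j = - int a \<or> \<phi> j = - int (Suc a)) \<and>
           (newphi n a \<pi> \<phi> j = - int a \<or> newphi n a \<pi> \<phi> j = - int (Suc a))"
    unfolding newphi_def Sset_def by auto
  show "\<And>j. j \<in> FIXset \<pi> n \<Longrightarrow> j \<notin> Sset n a \<pi> \<phi> \<Longrightarrow> \<phi> j \<noteq> - int a \<and> \<phi> j \<noteq> - int (Suc a)"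
    unfolding Sset_def by auto
next
  fix j
  let ?S = "Sset n a \<pi> \<phi>" and ?b = "\<lambda>i. \<phi> i = -int a"
  assume j: "j \<in> ?S" "Suc j \<in> ?S"
  have v: "\<phi> j = -int a \<or> \<phi> j = -int (Suc a)" "\<phi> (Suc j) = -int a \<or> \<phi> (Suc j) = -int (Suc a)"
    using j unfolding Sset_def by auto
  have c1: "(\<phi> j > \<phi> (Suc j)) = (j \<in> Dset ?S ?b)" using v j unfolding Dset_def by auto
  have nv: "newphi n a \<pi> \<phi> j = (if trb ?S ?b j then -int a else -int (Suc a))"
     "newphi n a \<pi> \<phi> (Suc j) = (if trb ?S ?b (Suc j) then -int a else -int (Suc a))"
    using j unfolding newphi_def by auto
  have c2: "(newphi n a \<pi> \<phi> j > newphi n a \<pi> \<phi> (Suc j)) = (j \<in> Dset ?S (trb ?S ?b))"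
    unfolding nv using j unfolding Dset_def by auto
  show "(\<phi> j > \<phi> (Suc j)) = (newphi n a \<pi> \<phi> j > newphi n a \<pi> \<phi> (Suc j))"
    unfolding c1 c2 Dset_trb[OF fin_S] ..
qed




definition Rel :: "nat \<Rightarrow> nat \<Rightarrow> (nat \<Rightarrow> nat) \<Rightarrow> (nat \<Rightarrow> nat) \<Rightarrow> bool" where
  "Rel n k m m' = (\<exists>f. bij_betw f (arrangements_m n k m) (arrangements_m n k m') \<and>
     (\<forall>a \<in> arrangements_m n k m. DES_arr n k (f a) = DES_arr n k a \<and>
        DEZ_arr n k (f a) = DEZ_arr n k a \<and> Der_arr n k (f a) = Der_arr n k a))"

lemma Rel_refl: "Rel n k m m"
  unfolding Rel_def by (rule exI[of _ id]) simp

lemma Rel_trans: assumes "Rel n k m1 m2" "Rel n k m2 m3" shows "Rel n k m1 m3"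
proof -
  obtain f where f: "bij_betw f (arrangements_m n k m1) (arrangements_m n k m2)"
    "\<forall>a \<in> arrangements_m n k m1. DES_arr n k (f a) = DES_arr n k a \<and>
        DEZ_arr n k (f a) = DEZ_arr n k a \<and> Der_arr n k (f a) = Der_arr n k a"
    using assms(1) unfolding Rel_def by blast
  obtain g where g: "bij_betw g (arrangements_m n k m2) (arrangements_m n k m3)"
    "\<forall>a \<in> arrangements_m n k m2. DES_arr n k (g a) = DES_arr n k a \<and>
        DEZ_arr n k (g a) = DEZ_arr n k a \<and> Der_arr n k (g a) = Der_arr n k a"
    using assms(2) unfolding Rel_def by blast
  have "bij_betw (g \<circ> f) (arrangements_m n k m1) (arrangements_m n k m3)"
    using bij_betw_trans[OF f(1) g(1)] .
  moreover have "\<forall>a \<in> arrangements_m n k m1. DES_arr n k ((g \<circ> f) a) = DES_arr n k a \<and>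
        DEZ_arr n k ((g \<circ> f) a) = DEZ_arr n k a \<and> Der_arr n k ((g \<circ> f) a) = Der_arr n k a"
  proof
    fix a assume a: "a \<in> arrangements_m n k m1"
    have fa: "f a \<in> arrangements_m n k m2" using f(1) a bij_betwE by blast
    show "DES_arr n k ((g \<circ> f) a) = DES_arr n k a \<and>
        DEZ_arr n k ((g \<circ> f) a) = DEZ_arr n k a \<and> Der_arr n k ((g \<circ> f) a) = Der_arr n k a"
      using f(2) a g(2) fa by simp
  qed
  ultimately show ?thesis unfolding Rel_def by blast
qed

lemma Psi_maps:
  assumes "x \<in> arrangements_m n k m" "1 \<le> a" "Suc a < k"
  shows "Psi n a x \<in> arrangements_m n k (m \<circ> Transposition.transpose a (Suc a))"
proof -
  obtain \<pi> \<phi> where x: "x = (\<pi>, \<phi>)" by (cases x)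
  have arr: "(\<pi>, \<phi>) \<in> arrangements n k" and c: "\<forall>i\<in>{1..k}. fix_cnt n i (\<pi>, \<phi>) = m i"
    using assms(1) x unfolding arrangements_m_def by auto
  have P: "Psi n a x = (\<pi>, newphi n a \<pi> \<phi>)" unfolding Psi_def x by simp
  have "(\<pi>, newphi n a \<pi> \<phi>) \<in> arrangements n k" using arr_new[OF arr assms(2)] assms(3) by simp
  moreover have "\<forall>i\<in>{1..k}. fix_cnt n i (\<pi>, newphi n a \<pi> \<phi>) = (m \<circ> Transposition.transpose a (Suc a)) i"
  proof
    fix i assume i: "i \<in> {1..k}"
    have ia: "a \<in> {1..k}" "Suc a \<in> {1..k}" using assms by auto
    show "fix_cnt n i (\<pi>, newphi n a \<pi> \<phi>) = (m \<circ> Transposition.transpose a (Suc a)) i"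
    proof (cases "i = a")
      case True thus ?thesis using cnt_new_a(1) c ia by simp
    next
      case False note F1 = False
      show ?thesis
      proof (cases "i = Suc a")
        case True thus ?thesis using cnt_new_a(2) c ia by simp
      next
        case False thus ?thesis using F1 cnt_new c i by (simp add: transpose_def)
      qed
    qed
  qed
  ultimately show ?thesis unfolding P arrangements_m_def by simp
qed

lemma Rel_adj: assumes "1 \<le> a" "Suc a < k"
  shows "Rel n k m (m \<circ> Transposition.transpose a (Suc a))"
proof -
  let ?t = "Transposition.transpose a (Suc a)"
  have tt: "m \<circ> ?t \<circ> ?t = m" by (rule ext) (simp add: transpose_def)
  have "bij_betw (Psi n a) (arrangements_m n k m) (arrangements_m n k (m \<circ> ?t))"
  proof (rule bij_betw_byWitness[where f' = "Psi n a"])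
    show "\<forall>x\<in>arrangements_m n k m. Psi n a (Psi n a x) = x" using Psi_inv by blast
    show "\<forall>x\<in>arrangements_m n k (m \<circ> ?t). Psi n a (Psi n a x) = x" using Psi_inv by blast
    show "Psi n a ` arrangements_m n k m \<subseteq> arrangements_m n k (m \<circ> ?t)" using Psi_maps assms by blast
    show "Psi n a ` arrangements_m n k (m \<circ> ?t) \<subseteq> arrangements_m n k m"
      using Psi_maps[OF _ assms, of _ n "m \<circ> ?t"] tt by auto
  qed
  moreover have "\<forall>x \<in> arrangements_m n k m. DES_arr n k (Psi n a x) = DES_arr n k x \<and>
        DEZ_arr n k (Psi n a x) = DEZ_arr n k x \<and> Der_arr n k (Psi n a x) = Der_arr n k x"
  proof
    fix x assume x: "x \<in> arrangements_m n k m"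
    obtain \<pi> \<phi> where xx: "x = (\<pi>, \<phi>)" by (cases x)
    have arr: "(\<pi>, \<phi>) \<in> arrangements n k" using x xx unfolding arrangements_m_def by auto
    show "DES_arr n k (Psi n a x) = DES_arr n k x \<and>
        DEZ_arr n k (Psi n a x) = DEZ_arr n k x \<and> Der_arr n k (Psi n a x) = Der_arr n k x"
      unfolding xx Psi_def using stats_new[OF arr assms] by simp
  qed
  ultimately show ?thesis unfolding Rel_def by blast
qed

lemma Rel_transp_d:
  "1 \<le> a \<Longrightarrow> a + d < k \<Longrightarrow> Rel n k m (m \<circ> Transposition.transpose a (a + d))"
proof (induction d arbitrary: a m)
  case 0
  have "m \<circ> Transposition.transpose a (a + 0) = m" by (rule ext) (simp add: transpose_def)
  thus ?case using Rel_refl by simp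
next
  case (Suc d)
  show ?case
  proof (cases "d = 0")
    case True
    hence e: "a + Suc d = Suc a" by simp
    have "Rel n k m (m \<circ> Transposition.transpose a (Suc a))" using Rel_adj Suc.prems e by simp
    thus ?thesis unfolding e .
  next
    case False
    let ?t1 = "Transposition.transpose a (Suc a)" and ?t2 = "Transposition.transpose (Suc a) (Suc a + d)"
    have eq: "Transposition.transpose a (a + Suc d) = ?t1 \<circ> ?t2 \<circ> ?t1"
      using False by (intro ext) (simp add: transpose_def)
    have r1: "Rel n k m (m \<circ> ?t1)" using Rel_adj Suc.prems by simp
    have h1: "1 \<le> Suc a" by simp
    have h2: "Suc a + d < k" using Suc.prems by simp
    have r2: "Rel n k (m \<circ> ?t1) (m \<circ> ?t1 \<circ> ?t2)" by (rule Suc.IH[OF h1 h2])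
    have r3: "Rel n k (m \<circ> ?t1 \<circ> ?t2) (m \<circ> ?t1 \<circ> ?t2 \<circ> ?t1)" using Rel_adj Suc.prems by simp
    have "Rel n k m (m \<circ> ?t1 \<circ> ?t2 \<circ> ?t1)" using Rel_trans[OF Rel_trans[OF r1 r2] r3] .
    thus ?thesis unfolding eq by (simp only: comp_assoc)
  qed
qed

lemma Rel_transp:
  assumes "a \<in> {1..k-1}" "b \<in> {1..k-1}"
  shows "Rel n k m (m \<circ> Transposition.transpose a b)"
proof (cases "a \<le> b")
  case True
  then obtain d where "b = a + d" using le_Suc_ex by blast
  thus ?thesis using Rel_transp_d[of a d k n m] assms by auto
next
  case False
  then obtain d where "a = b + d" using le_Suc_ex[of b a] by auto
  hence "Rel n k m (m \<circ> Transposition.transpose b a)" using Rel_transp_d[of b d k n m] assms by auto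
  thus ?thesis by (simp add: transpose_commute)
qed

lemma Rel_perm:
  assumes "\<tau> permutes {1..k-1}"
  shows "\<forall>m. Rel n k m (m \<circ> \<tau>)"
  using assms finite_atLeastAtMost
proof (induction rule: permutes_induct)
  case id
  then show ?case using Rel_refl by simp
next
  case (swap a b p)
  show ?case
  proof
    fix m
    have "Rel n k m (m \<circ> Transposition.transpose a b)" using Rel_transp swap by blast
    moreover have "Rel n k (m \<circ> Transposition.transpose a b) (m \<circ> Transposition.transpose a b \<circ> p)"
      using swap.IH by blast
    ultimately show "Rel n k m (m \<circ> (Transposition.transpose a b \<circ> p))"
      using Rel_trans by (simp add: comp_assoc)
  qed
qed

theorem lemma2p3:
  fixes n k :: nat and m :: "nat \<Rightarrow> nat" and \<tau> :: "nat \<Rightarrow> nat"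
  assumes "n \<ge> 1" and "k \<ge> 1" and "\<tau> permutes {1..k-1}"
  shows "\<exists>f. bij_betw f (arrangements_m n k m)
              (arrangements_m n k (\<lambda>i. if i \<in> {1..k-1} then m (\<tau> i) else m i)) \<and>
            (\<forall>a \<in> arrangements_m n k m.
               DES_arr n k (f a) = DES_arr n k a \<and>
               DEZ_arr n k (f a) = DEZ_arr n k a \<and>
               Der_arr n k (f a) = Der_arr n k a)"
proof -
  have e: "(\<lambda>i. if i \<in> {1..k-1} then m (\<tau> i) else m i) = m \<circ> \<tau>"
    using permutes_not_in[OF assms(3)] by (intro ext) auto
  have "Rel n k m (m \<circ> \<tau>)" using Rel_perm[OF assms(3)] by blast
  thus ?thesis unfolding e Rel_def .
qed


end
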